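(* Let $H$ be a $3$-graph for which there is an enumeration $V(H)=\{v_1,\dots,v_n\}$ and a colouring $\phi$ of the pairs $\{v_a,v_b\}$ covered by edges of $H$ with colours red, blue, green such that every edge $\{v_i,v_j,v_k\}\in E(H)$ with $i<j<k$ satisfies $\phi(v_iv_j)=\text{red}$, $\phi(v_iv_k)=\text{blue}$, $\phi(v_jv_k)=\text{green}$. Then every subhypergraph $H'\subseteq H$ satisfies $\delta_{\mathrm{co}}(H')\le 1$.
   Context: A $3$-graph is a $3$-uniform hypergraph. For a $3$-graph $H$ and a $2$-subset $S\subseteq V(H)$, $d_H(S)$ is the number of edges containing $S$, and the minimum codegree $\delta_{\mathrm{co}}(H)$ is the minimum of $d_H(S)$ over all $2$-subsets $S$ of $V(H)$. *)

theory Defs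
  imports Main
begin

definition is_3graph :: "'a set \<Rightarrow> 'a set set \<Rightarrow> bool" where
  "is_3graph V E \<longleftrightarrow> finite V \<and> (\<forall>e\<in>E. e \<subseteq> V \<and> card e = 3)"

definition subhypergraph :: "'a set \<Rightarrow> 'a set set \<Rightarrow> 'a set \<Rightarrow> 'a set set \<Rightarrow> bool" where
  "subhypergraph V' E' V E \<longleftrightarrow> V' \<subseteq> V \<and> E' \<subseteq> E \<and> (\<forall>e\<in>E'. e \<subseteq> V')"

definition codeg :: "'a set set \<Rightarrow> 'a set \<Rightarrow> nat" where
  "codeg E S = card {e \<in> E. S \<subseteq> e}"

text \<open>Minimum codegree over all 2-subsets of V (meaningful when card V \<ge> 2).\<close>
definition min_codeg :: "'a set \<Rightarrow> 'a set set \<Rightarrow> nat" where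
  "min_codeg V E = Min {codeg E S | S. S \<subseteq> V \<and> card S = 2}"

datatype colour = Red | Blue | Green

end

theory Submission
  imports Defs
begin

lemma three_split:
  assumes "card e = 3" "b \<in> e" "c \<in> e" "b \<noteq> c"
  obtains d where "e = {b, c, d}" "d \<noteq> b" "d \<noteq> c"
proof -
  have f: "finite e" using assms(1) by (metis card.infinite zero_neq_numeral)
  have "card (e - {b, c}) = 1" using assms f by (simp add: card_Diff_subset)
  then obtain d where d: "e - {b, c} = {d}" by (metis card_1_singletonE)
  then have "e = {b, c, d}" using assms by blast
  moreover have "d \<noteq> b" "d \<noteq> c" using d by auto
  ultimately show ?thesis using that by blast
qed

theorem mainTheorem2:
  fixes V :: "'a set" and E :: "'a set set" and n :: nat
    and v :: "nat \<Rightarrow> 'a" and \<phi> :: "'a set \<Rightarrow> colour"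
  assumes H: "is_3graph V E"
    and enum: "bij_betw v {1..n} V"
    and col: "\<forall>i j k. 1 \<le> i \<and> i < j \<and> j < k \<and> k \<le> n \<and> {v i, v j, v k} \<in> E \<longrightarrow>
                 \<phi> {v i, v j} = Red \<and> \<phi> {v i, v k} = Blue \<and> \<phi> {v j, v k} = Green"
  shows "\<forall>V' E'. subhypergraph V' E' V E \<and> card V' \<ge> 2 \<longrightarrow> min_codeg V' E' \<le> 1"
proof (intro allI impI)
  fix V' E'
  assume A: "subhypergraph V' E' V E \<and> card V' \<ge> 2"
  define w where "w = inv_into {1..n} v"
  have finV: "finite V" using H unfolding is_3graph_def by blast
  have sub: "V' \<subseteq> V" "E' \<subseteq> E" "\<forall>e\<in>E'. e \<subseteq> V'" using A unfolding subhypergraph_def by auto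
  have finV': "finite V'" using sub finV finite_subset by blast
  have wr: "w x \<in> {1..n}" if "x \<in> V" for x
    using that enum unfolding w_def by (metis bij_betw_def inv_into_into)
  have vw: "v (w x) = x" if "x \<in> V" for x
    using that enum unfolding w_def by (metis bij_betw_def f_inv_into_f)
  have winj: "inj_on w V"
    by (metis inj_on_def vw)
  have card3: "card e = 3" if "e \<in> E" for e using H that unfolding is_3graph_def by blast
  have notgreen: "\<phi> {x, y} \<noteq> Green"
    if "{x, y, z} \<in> E" "x \<in> V" "y \<in> V" "z \<in> V" "w x < w y" "w x < w z" "y \<noteq> z" for x y z
  proof (cases "w y < w z")
    case True
    have "{v (w x), v (w y), v (w z)} \<in> E" using that vw by simp
    then have "\<phi> {v (w x), v (w y)} = Red" using col True that wr[of x] wr[of z] by auto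
    then show ?thesis using vw that by simp
  next
    case False
    have "w y \<noteq> w z" using winj that by (meson inj_on_contraD)
    then have lt: "w z < w y" using False by simp
    have "{v (w x), v (w z), v (w y)} \<in> E" using that vw by (simp add: insert_commute)
    then have "\<phi> {v (w x), v (w y)} = Blue" using col lt that wr[of x] wr[of y] by auto
    then show ?thesis using vw that by simp
  qed
  have green: "\<phi> {y, z} = Green"
    if "{x, y, z} \<in> E" "x \<in> V" "y \<in> V" "z \<in> V" "w x < w y" "w y < w z" for x y z
  proof -
    have "{v (w x), v (w y), v (w z)} \<in> E" using that vw by simp
    then have "\<phi> {v (w y), v (w z)} = Green" using col that wr[of x] wr[of z] by auto
    then show ?thesis using vw that by simp
  qed
  define I where "I = w ` V'"
  have finI: "finite I" using finV' I_def by simp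
  have "card I = card V'" unfolding I_def using card_image[OF inj_on_subset[OF winj sub(1)]] .
  then have cardI: "card I \<ge> 2" using A by simp
  define ai where "ai = Min I"
  have Ine: "I \<noteq> {}" using cardI by auto
  have aiI: "ai \<in> I" using finI Ine ai_def by simp
  have I2ne: "I - {ai} \<noteq> {}"
  proof
    assume "I - {ai} = {}"
    then have "I \<subseteq> {ai}" by blast
    then have "card I \<le> 1" using card_mono[of "{ai}" I] by simp
    then show False using cardI by simp
  qed
  define bi where "bi = Min (I - {ai})"
  have biI: "bi \<in> I - {ai}" unfolding bi_def using finI I2ne by (intro Min_in) auto
  have aib: "ai < bi" using biI ai_def finI by (metis Diff_iff Min_le order_le_neq_trans singletonI)
  have bimin: "bi < j" if "j \<in> I" "j \<noteq> ai" "j \<noteq> bi" for j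
    using that bi_def finI by (metis Diff_iff Min_le finite_Diff order_le_neq_trans singletonD)
  obtain a where a: "a \<in> V'" "w a = ai" using aiI I_def by auto
  obtain b where b: "b \<in> V'" "w b = bi" using biI I_def by auto
  have aV: "a \<in> V" and bV: "b \<in> V" using a b sub by auto
  have ab: "a \<noteq> b" using a b aib by auto
  let ?C = "{codeg E' S | S. S \<subseteq> V' \<and> card S = 2}"
  have finC: "finite ?C"
  proof -
    have "?C = (\<lambda>S. codeg E' S) ` {S. S \<subseteq> V' \<and> card S = 2}" by auto
    moreover have "finite {S. S \<subseteq> V' \<and> card S = 2}" using finV' by simp
    ultimately show ?thesis by simp
  qed
  have mle: "min_codeg V' E' \<le> codeg E' S" if "S \<subseteq> V'" "card S = 2" for S
    unfolding min_codeg_def using finC that by (intro Min_le) auto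
  show "min_codeg V' E' \<le> 1"
  proof (cases "codeg E' {a, b} = 0")
    case True
    then show ?thesis using mle[of "{a,b}"] a b ab by simp
  next
    case False
    then have "{e \<in> E'. {a, b} \<subseteq> e} \<noteq> {}" unfolding codeg_def by (metis card.empty)
    then obtain e where e: "e \<in> E'" "{a, b} \<subseteq> e" by blast
    have eE: "e \<in> E" using e sub by auto
    obtain c where c: "e = {a, b, c}" "c \<noteq> a" "c \<noteq> b"
      using three_split[OF card3[OF eE], of a b] e ab by auto
    have cV': "c \<in> V'" using c e sub by auto
    have cV: "c \<in> V" using cV' sub by auto
    have "w c \<noteq> ai" "w c \<noteq> bi" using inj_on_eq_iff[OF winj] a b aV bV cV c by auto
    then have wc: "bi < w c" using bimin[of "w c"] cV' I_def by auto
    have gr: "\<phi> {b, c} = Green" using green[of a b c] c eE aV bV cV a b aib wc by simp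
    have bc: "b \<noteq> c" using c by simp
    have "{e \<in> E'. {b, c} \<subseteq> e} \<subseteq> {{a, b, c}}"
    proof
      fix f assume f: "f \<in> {e \<in> E'. {b, c} \<subseteq> e}"
      then have fE: "f \<in> E" using sub by auto
      obtain d where d: "f = {b, c, d}" "d \<noteq> b" "d \<noteq> c"
        using three_split[OF card3[OF fE], of b c] f bc by auto
      have dV': "d \<in> V'" using d f sub by auto
      have dV: "d \<in> V" using dV' sub by auto
      show "f \<in> {{a, b, c}}"
      proof (cases "d = a")
        case True then show ?thesis using d by (auto simp: insert_commute)
      next
        case False
        have "w d \<noteq> ai" "w d \<noteq> bi" using inj_on_eq_iff[OF winj] a b aV bV dV d False by auto
        then have wd: "bi < w d" using bimin[of "w d"] dV' I_def by auto
        have "\<phi> {b, c} \<noteq> Green" using notgreen[of b c d] fE d bV cV dV b wc wd bc by simp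
        then show ?thesis using gr by simp
      qed
    qed
    then have "codeg E' {b, c} \<le> 1" unfolding codeg_def
      using card_mono[of "{{a, b, c}}"] by fastforce
    moreover have "{b, c} \<subseteq> V'" "card {b, c} = 2" using b cV' bc by auto
    ultimately show ?thesis using mle by (meson le_trans)
  qed
qed

end
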